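(* There exists a function $f(n,w)$ such that for all positive integers $n,w$ the following holds. If $G$ is a connected graph and $(T,\mathcal{Y})$ is a lean tree-decomposition of $G$ of width at most $w$ such that $T$ contains a path $P$ of length at least $f(n,w)$, then $P$ has interior vertices $t_1,t_2,\ldots,t_n$, occurring along $P$ in this order, such that: (i) for some positive integer $s\leq w+1$, $|Y_{t_i}|=s$ for all $i\in[n]$, and $|Y_t|\geq s$ for every vertex $t$ of $P$ between $t_1$ and $t_n$; and (ii) there is a set $U\subseteq V(G)$ with $Y_{t_i}\cap Y_{t_j}=U$ for all distinct $i,j\in[n]$.
   Context: All graphs are finite and loopless but may have parallel edges; $[n]=\{1,\dots,n\}$. A tree-decomposition of $G$ is a pair $(T,\mathcal{Y})$ where $T$ is a tree and $\mathcal{Y}=\{Y_t\}_{t\in V(T)}$ is a family of subsets of $V(G)$ (bags) such that (W1) $\bigcup_{t} Y_t=V(G)$ and every edge of $G$ has both ends in some $Y_t$; and (W2) if $t'$ lies on the path of $T$ between $t$ and $t''$ then $Y_t\cap Y_{t''}\subseteq Y_{t'}$. Its width is $\max_t(|Y_t|-1)$. It is lean if additionally: (W3) for every two vertices $t,t'$ of $T$ and every positive integer $k$, either $G$ has $k$ vertex-disjoint paths between $Y_t$ and $Y_{t'}$, or some vertex $t''$ on the path of $T$ between $t$ and $t'$ has $|Y_{t''}|<k$; (W4) distinct vertices $t\ne t'$ of $T$ have $Y_t\neq Y_{t'}$; (W5) if $t_0\in V(T)$ and $B$ is a component of $T-t_0$, then $\bigcup_{t\in V(B)}Y_t\setminus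 Y_{t_0}\neq\emptyset$. *)

theory Defs
  imports Main
begin

text \<open>Finite loopless multigraphs: vertex set V, edge set E, and an endpoint map
  ends assigning to each edge its two (distinct) ends.\<close>
definition multigraph :: "'v set \<Rightarrow> 'e set \<Rightarrow> ('e \<Rightarrow> 'v set) \<Rightarrow> bool" where
  "multigraph V E ends \<longleftrightarrow> finite V \<and> finite E \<and>
     (\<forall>e\<in>E. ends e \<subseteq> V \<and> card (ends e) = 2)"

definition mg_adj :: "'e set \<Rightarrow> ('e \<Rightarrow> 'v set) \<Rightarrow> 'v \<Rightarrow> 'v \<Rightarrow> bool" where
  "mg_adj E ends u v \<longleftrightarrow> (\<exists>e\<in>E. ends e = {u, v})"

definition is_path :: "('a \<Rightarrow> 'a \<Rightarrow> bool) \<Rightarrow> 'a set \<Rightarrow> 'a list \<Rightarrow> bool" where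
  "is_path R S xs \<longleftrightarrow> xs \<noteq> [] \<and> distinct xs \<and> set xs \<subseteq> S \<and>
     (\<forall>i. Suc i < length xs \<longrightarrow> R (xs ! i) (xs ! Suc i))"

definition connected_on :: "('a \<Rightarrow> 'a \<Rightarrow> bool) \<Rightarrow> 'a set \<Rightarrow> bool" where
  "connected_on R S \<longleftrightarrow>
     (\<forall>u\<in>S. \<forall>v\<in>S. \<exists>xs. is_path R S xs \<and> hd xs = u \<and> last xs = v)"

definition simple_graph :: "'a set \<Rightarrow> ('a \<Rightarrow> 'a \<Rightarrow> bool) \<Rightarrow> bool" where
  "simple_graph VT ET \<longleftrightarrow> finite VT \<and>
     (\<forall>x y. ET x y \<longrightarrow> x \<in> VT \<and> y \<in> VT \<and> x \<noteq> y \<and> ET y x)"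

definition is_cycle :: "'a set \<Rightarrow> ('a \<Rightarrow> 'a \<Rightarrow> bool) \<Rightarrow> 'a list \<Rightarrow> bool" where
  "is_cycle VT ET xs \<longleftrightarrow> is_path ET VT xs \<and> 3 \<le> length xs \<and> ET (last xs) (hd xs)"

definition is_tree :: "'a set \<Rightarrow> ('a \<Rightarrow> 'a \<Rightarrow> bool) \<Rightarrow> bool" where
  "is_tree VT ET \<longleftrightarrow> simple_graph VT ET \<and> VT \<noteq> {} \<and> connected_on ET VT \<and>
     \<not> (\<exists>xs. is_cycle VT ET xs)"

definition on_tpath :: "'a set \<Rightarrow> ('a \<Rightarrow> 'a \<Rightarrow> bool) \<Rightarrow> 'a \<Rightarrow> 'a \<Rightarrow> 'a \<Rightarrow> bool" where
  "on_tpath VT ET t t' x \<longleftrightarrow>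
     (\<exists>xs. is_path ET VT xs \<and> hd xs = t \<and> last xs = t' \<and> x \<in> set xs)"

definition tree_decomp ::
  "'v set \<Rightarrow> 'e set \<Rightarrow> ('e \<Rightarrow> 'v set) \<Rightarrow> 't set \<Rightarrow> ('t \<Rightarrow> 't \<Rightarrow> bool) \<Rightarrow> ('t \<Rightarrow> 'v set) \<Rightarrow> bool" where
  "tree_decomp V E ends VT ET Y \<longleftrightarrow> is_tree VT ET \<and>
     (\<forall>t\<in>VT. Y t \<subseteq> V) \<and>
     (\<Union>t\<in>VT. Y t) = V \<and>
     (\<forall>e\<in>E. \<exists>t\<in>VT. ends e \<subseteq> Y t) \<and>
     (\<forall>t t' t''. t \<in> VT \<longrightarrow> t'' \<in> VT \<longrightarrow> on_tpath VT ET t t'' t' \<longrightarrow> Y t \<inter> Y t'' \<subseteq> Y t')"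

definition has_disj_paths :: "('a \<Rightarrow> 'a \<Rightarrow> bool) \<Rightarrow> 'a set \<Rightarrow> 'a set \<Rightarrow> 'a set \<Rightarrow> nat \<Rightarrow> bool" where
  "has_disj_paths R S A B k \<longleftrightarrow> (\<exists>p :: nat \<Rightarrow> 'a list.
     (\<forall>i<k. is_path R S (p i) \<and> hd (p i) \<in> A \<and> last (p i) \<in> B) \<and>
     (\<forall>i<k. \<forall>j<k. i \<noteq> j \<longrightarrow> set (p i) \<inter> set (p j) = {}))"

definition components_minus :: "'a set \<Rightarrow> ('a \<Rightarrow> 'a \<Rightarrow> bool) \<Rightarrow> 'a \<Rightarrow> 'a set set" where
  "components_minus VT ET t0 = {C. \<exists>x\<in>VT - {t0}.
     C = {y. \<exists>xs. is_path ET (VT - {t0}) xs \<and> hd xs = x \<and> last xs = y}}"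

definition lean_tree_decomp ::
  "'v set \<Rightarrow> 'e set \<Rightarrow> ('e \<Rightarrow> 'v set) \<Rightarrow> 't set \<Rightarrow> ('t \<Rightarrow> 't \<Rightarrow> bool) \<Rightarrow> ('t \<Rightarrow> 'v set) \<Rightarrow> bool" where
  "lean_tree_decomp V E ends VT ET Y \<longleftrightarrow> tree_decomp V E ends VT ET Y \<and>
     (\<forall>t\<in>VT. \<forall>t'\<in>VT. \<forall>k::nat. 0 < k \<longrightarrow>
        has_disj_paths (mg_adj E ends) V (Y t) (Y t') k \<or>
        (\<exists>t''. on_tpath VT ET t t' t'' \<and> card (Y t'') < k)) \<and>
     (\<forall>t\<in>VT. \<forall>t'\<in>VT. t \<noteq> t' \<longrightarrow> Y t \<noteq> Y t') \<and>
     (\<forall>t0\<in>VT. \<forall>B\<in>components_minus VT ET t0. (\<Union>t\<in>B. Y t) - Y t0 \<noteq> {})"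

end

theory Submission
  imports Defs
begin


fun Bd :: "nat \<Rightarrow> nat \<Rightarrow> nat" where
  "Bd 0 k = 1"
| "Bd (Suc s) k = 1 + k * Suc s * Bd s k"

lemma Bd_pos: "1 \<le> Bd s k" by (cases s) auto

lemma sunflower:
  "finite I \<Longrightarrow> inj_on g I \<Longrightarrow> \<forall>i\<in>I. finite (g i) \<and> card (g i) \<le> s \<Longrightarrow> Bd s k < card I \<Longrightarrow>
   \<exists>J U. J \<subseteq> I \<and> card J = k \<and> (\<forall>i\<in>J. \<forall>j\<in>J. i \<noteq> j \<longrightarrow> g i \<inter> g j = U)"
proof (induction s arbitrary: I g)
  case 0
  have "\<forall>i\<in>I. g i = {}" using "0.prems"(3) by auto
  hence "\<forall>a1\<in>I. \<forall>a2\<in>I. a1 = a2" using "0.prems"(2) by (auto simp: inj_on_def)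
  hence "card I \<le> Suc 0" using card_le_Suc0_iff_eq[OF "0.prems"(1)] by blast
  thus ?case using "0.prems"(4) by simp
next
  case (Suc s)
  note fin = Suc.prems(1) and inj = Suc.prems(2) and cd = Suc.prems(3) and big = Suc.prems(4)
  define C where "C = {M. M \<subseteq> I \<and> (\<forall>i\<in>M. \<forall>j\<in>M. i\<noteq>j \<longrightarrow> g i \<inter> g j = {})}"
  have "C \<subseteq> Pow I" unfolding C_def by blast
  hence finC: "finite C" by (rule finite_subset) (simp add: fin)
  have "{} \<in> C" unfolding C_def by auto
  then obtain M where MC: "M \<in> C" and Mmax: "\<forall>M'\<in>C. card M' \<le> card M"
  proof -
    have ne: "card ` C \<noteq> {}" using \<open>{} \<in> C\<close> by blast
    have "Max (card ` C) \<in> card ` C" using Max_in[OF finite_imageI[OF finC] ne] .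
    then obtain M where M1: "M \<in> C" and M2: "card M = Max (card ` C)" by (metis imageE)
    have "\<forall>M'\<in>C. card M' \<le> Max (card ` C)" using Max_ge[OF finite_imageI[OF finC]] by blast
    hence "\<forall>M'\<in>C. card M' \<le> card M" unfolding M2 .
    thus ?thesis by (rule that[OF M1])
  qed
  have MI: "M \<subseteq> I" and Mdisj: "\<forall>i\<in>M. \<forall>j\<in>M. i\<noteq>j \<longrightarrow> g i \<inter> g j = {}" using MC unfolding C_def by auto
  have finM: "finite M" using MI fin finite_subset by blast
  show ?case
  proof (cases "k \<le> card M")
    case True
    then obtain J where "J \<subseteq> M" "card J = k" "finite J" by (rule obtain_subset_with_card_n)
    moreover have "\<forall>i\<in>J. \<forall>j\<in>J. i\<noteq>j \<longrightarrow> g i \<inter> g j = {}" using \<open>J \<subseteq> M\<close> Mdisj by blast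
    ultimately have pd: "\<forall>i\<in>J. \<forall>j\<in>J. i\<noteq>j \<longrightarrow> g i \<inter> g j = {}" by blast
    show ?thesis
    proof (intro exI conjI)
      show "J \<subseteq> I" using \<open>J \<subseteq> M\<close> MI by blast
      show "card J = k" by fact
      show "\<forall>i\<in>J. \<forall>j\<in>J. i\<noteq>j \<longrightarrow> g i \<inter> g j = {}" by (rule pd)
    qed
  next
    case False
    define D where "D = (\<Union>i\<in>M. g i)"
    have finD: "finite D" unfolding D_def using finM MI cd by auto
    have "card D \<le> (\<Sum>i\<in>M. card (g i))" unfolding D_def using card_UN_le[OF finM] .
    also have "\<dots> \<le> card M * Suc s" using sum_bounded_above[of M "\<lambda>i. card (g i)" "Suc s"] MI cd by auto
    also have "\<dots> \<le> k * Suc s" using False mult_le_mono1[of "card M" k "Suc s"] by linarith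
    finally have cardD: "card D \<le> k * Suc s" .
    have cover: "{i\<in>I. g i \<noteq> {}} \<subseteq> (\<Union>x\<in>D. {i\<in>I. x \<in> g i})"
    proof
      fix i assume i: "i \<in> {i\<in>I. g i \<noteq> {}}"
      show "i \<in> (\<Union>x\<in>D. {i\<in>I. x \<in> g i})"
      proof (cases "i \<in> M")
        case True
        then obtain x where "x \<in> g i" using i by auto
        thus ?thesis using True i unfolding D_def by auto
      next
        case notM: False
        show ?thesis
        proof (rule ccontr)
          assume "i \<notin> (\<Union>x\<in>D. {i\<in>I. x \<in> g i})"
          hence gD: "g i \<inter> D = {}" using i by auto
          have "insert i M \<in> C" unfolding C_def using MI Mdisj gD i unfolding D_def by auto
          hence "card (insert i M) \<le> card M" using Mmax by blast
          thus False using notM finM by simp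
        qed
      qed
    qed
    have emp: "card {i\<in>I. g i = {}} \<le> 1"
    proof -
      have "\<forall>a1\<in>{i\<in>I. g i = {}}. \<forall>a2\<in>{i\<in>I. g i = {}}. a1 = a2" using inj by (auto simp: inj_on_def)
      thus ?thesis using card_le_Suc0_iff_eq[of "{i\<in>I. g i = {}}"] fin by simp
    qed
    have "card I = card ({i\<in>I. g i = {}} \<union> {i\<in>I. g i \<noteq> {}})" by (rule arg_cong[where f=card]) auto
    hence "card I \<le> card {i\<in>I. g i = {}} + card {i\<in>I. g i \<noteq> {}}" using card_Un_le[of "{i\<in>I. g i = {}}" "{i\<in>I. g i \<noteq> {}}"] by linarith
    also have "card {i\<in>I. g i \<noteq> {}} \<le> card (\<Union>x\<in>D. {i\<in>I. x \<in> g i})"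
      using cover by (intro card_mono) (use fin finD in auto)
    finally have cI: "card I \<le> 1 + card (\<Union>x\<in>D. {i\<in>I. x \<in> g i})" using emp by linarith
    have "\<exists>x\<in>D. Bd s k < card {i\<in>I. x \<in> g i}"
    proof (rule ccontr)
      assume "\<not> (\<exists>x\<in>D. Bd s k < card {i\<in>I. x \<in> g i})"
      hence le: "\<forall>x\<in>D. card {i\<in>I. x \<in> g i} \<le> Bd s k" by (simp add: not_less)
      have "card (\<Union>x\<in>D. {i\<in>I. x \<in> g i}) \<le> (\<Sum>x\<in>D. card {i\<in>I. x \<in> g i})" using card_UN_le[OF finD] .
      also have "\<dots> \<le> card D * Bd s k" using sum_bounded_above[of D _ "Bd s k"] le by auto
      also have "\<dots> \<le> k * Suc s * Bd s k" using cardD by simp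
      finally show False using cI big by simp
    qed
    then obtain x where xD: "x \<in> D" and bx: "Bd s k < card {i\<in>I. x \<in> g i}" by blast
    define I' where "I' = {i\<in>I. x \<in> g i}"
    have "inj_on (\<lambda>i. g i - {x}) I'"
    proof (rule inj_onI)
      fix i j assume "i \<in> I'" "j \<in> I'" "g i - {x} = g j - {x}"
      moreover have "x \<in> g i" "x \<in> g j" using \<open>i \<in> I'\<close> \<open>j \<in> I'\<close> unfolding I'_def by auto
      ultimately have "g i = g j" by blast
      thus "i = j" using inj \<open>i \<in> I'\<close> \<open>j \<in> I'\<close> unfolding I'_def inj_on_def by auto
    qed
    moreover have "\<forall>i\<in>I'. finite (g i - {x}) \<and> card (g i - {x}) \<le> s"
      using cd unfolding I'_def by auto
    moreover have "finite I'" unfolding I'_def using fin by auto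
    ultimately obtain J U where J: "J \<subseteq> I'" "card J = k" "\<forall>i\<in>J. \<forall>j\<in>J. i \<noteq> j \<longrightarrow> (g i - {x}) \<inter> (g j - {x}) = U"
      using Suc.IH[of I' "\<lambda>i. g i - {x}"] bx unfolding I'_def by blast
    have "\<forall>i\<in>J. \<forall>j\<in>J. i \<noteq> j \<longrightarrow> g i \<inter> g j = insert x U"
    proof (intro ballI impI)
      fix i j assume "i \<in> J" "j \<in> J" "i \<noteq> j"
      hence "x \<in> g i" "x \<in> g j" "(g i - {x}) \<inter> (g j - {x}) = U" using J unfolding I'_def by auto
      thus "g i \<inter> g j = insert x U" by blast
    qed
    thus ?thesis using J unfolding I'_def by blast
  qed
qed



lemma seq_lemma:
  fixes a :: "nat \<Rightarrow> nat"
  assumes N1: "1 \<le> N"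
  shows "finite A \<Longrightarrow> card A \<le> m \<Longrightarrow> (\<forall>i. lo \<le> i \<longrightarrow> i < lo + L \<longrightarrow> a i \<in> A) \<Longrightarrow> N ^ m \<le> L \<Longrightarrow>
    \<exists>J s. J \<subseteq> {lo..<lo+L} \<and> card J = N \<and> (\<forall>j\<in>J. a j = s) \<and>
      (\<forall>j\<in>J. \<forall>j'\<in>J. \<forall>p. j \<le> p \<longrightarrow> p \<le> j' \<longrightarrow> s \<le> a p)"
proof (induction m arbitrary: A lo L)
  case 0
  hence "A = {}" by simp
  moreover have "a lo \<in> A" using "0.prems"(3,4) by simp
  ultimately show ?case by simp
next
  case (Suc m)
  note finA = Suc.prems(1) and cA = Suc.prems(2) and inA = Suc.prems(3) and LL = Suc.prems(4)
  define K where "K = N ^ m"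
  have K1: "1 \<le> K" unfolding K_def using N1 by simp
  have NK: "N * K \<le> L" using LL unfolding K_def by simp
  have "1 * 1 \<le> N * K" by (rule mult_le_mono[OF N1 K1])
  hence L1: "1 \<le> L" using NK by linarith
  define S where "S = a ` {lo..<lo+L}"
  have finS: "finite S" unfolding S_def by simp
  have neS: "S \<noteq> {}" unfolding S_def using L1 by auto
  define s0 where "s0 = Min S"
  have s0S: "s0 \<in> S" unfolding s0_def using Min_in[OF finS neS] .
  have s0le: "\<And>p. lo \<le> p \<Longrightarrow> p < lo + L \<Longrightarrow> s0 \<le> a p"
    unfolding s0_def S_def using finS S_def by (intro Min_le) auto
  have s0A: "s0 \<in> A" using s0S inA unfolding S_def by auto
  define Z where "Z = {i\<in>{lo..<lo+L}. a i = s0}"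
  show ?case
  proof (cases "N \<le> card Z")
    case True
    then obtain J where J: "J \<subseteq> Z" "card J = N" "finite J" by (rule obtain_subset_with_card_n)
    show ?thesis
    proof (intro exI conjI)
      show "J \<subseteq> {lo..<lo+L}" using J(1) unfolding Z_def by blast
      show "card J = N" by fact
      show "\<forall>j\<in>J. a j = s0" using J(1) unfolding Z_def by blast
      show "\<forall>j\<in>J. \<forall>j'\<in>J. \<forall>p. j \<le> p \<longrightarrow> p \<le> j' \<longrightarrow> s0 \<le> a p"
      proof (intro ballI allI impI)
        fix j j' p assume "j \<in> J" "j' \<in> J" "j \<le> p" "p \<le> j'"
        hence "lo \<le> p" "p < lo + L" using J(1) unfolding Z_def by auto
        thus "s0 \<le> a p" by (rule s0le)
      qed
    qed
  next
    case False
    have "\<exists>q<N. \<forall>i. lo + q*K \<le> i \<longrightarrow> i < lo + q*K + K \<longrightarrow> a i \<noteq> s0"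
    proof (rule ccontr)
      assume "\<not> ?thesis"
      hence "\<forall>q. \<exists>z. q < N \<longrightarrow> lo + q*K \<le> z \<and> z < lo + q*K + K \<and> a z = s0" by auto
      then obtain h where h0: "\<forall>q. q < N \<longrightarrow> lo + q*K \<le> h q \<and> h q < lo + q*K + K \<and> a (h q) = s0"
        by (rule choice[THEN exE])
      have h: "\<And>q. q < N \<Longrightarrow> lo + q*K \<le> h q \<and> h q < lo + q*K + K \<and> a (h q) = s0" using h0 by blast
      have "h ` {..<N} \<subseteq> Z"
      proof
        fix z assume "z \<in> h ` {..<N}"
        then obtain q where q: "q < N" "z = h q" by blast
        have "Suc q * K \<le> N * K" using q(1) by (intro mult_le_mono1) simp
        hence "q*K + K \<le> L" using NK by simp
        thus "z \<in> Z" unfolding Z_def using h[OF q(1)] q(2) by auto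
      qed
      moreover have "inj_on h {..<N}"
      proof (rule inj_onI)
        fix q q' assume q: "q \<in> {..<N}" "q' \<in> {..<N}" "h q = h q'"
        show "q = q'"
        proof (rule ccontr)
          assume "q \<noteq> q'"
          hence "q < q' \<or> q' < q" by arith
          thus False
          proof
            assume "q < q'"
            hence "Suc q * K \<le> q' * K" by (intro mult_le_mono1) simp
            thus False using h[of q] h[of q'] q by auto
          next
            assume "q' < q"
            hence "Suc q' * K \<le> q * K" by (intro mult_le_mono1) simp
            thus False using h[of q] h[of q'] q by auto
          qed
        qed
      qed
      moreover have "finite Z" unfolding Z_def by simp
      ultimately have "card {..<N} \<le> card Z" using card_inj_on_le[of h "{..<N}" Z] by blast
      thus False using False by simp
    qed
    then obtain q where q: "q < N" and blk: "\<forall>i. lo + q*K \<le> i \<longrightarrow> i < lo + q*K + K \<longrightarrow> a i \<noteq> s0" by blast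
    have "Suc q * K \<le> N * K" using q by (intro mult_le_mono1) simp
    hence qK: "q*K + K \<le> L" using NK by simp
    have i1: "\<forall>i. lo + q*K \<le> i \<longrightarrow> i < lo + q*K + K \<longrightarrow> a i \<in> A - {s0}"
      using blk inA qK by auto
    have i2: "card (A - {s0}) \<le> m" using cA s0A finA by simp
    have i3: "finite (A - {s0})" using finA by simp
    have i4: "N ^ m \<le> K" unfolding K_def by simp
    have ex: "\<exists>J s. J \<subseteq> {lo + q*K..<lo + q*K + K} \<and> card J = N \<and> (\<forall>j\<in>J. a j = s) \<and>
      (\<forall>j\<in>J. \<forall>j'\<in>J. \<forall>p. j \<le> p \<longrightarrow> p \<le> j' \<longrightarrow> s \<le> a p)"
      by (rule Suc.IH[OF i3 i2 i1 i4])
    then obtain J s where J: "J \<subseteq> {lo + q*K..<lo + q*K + K}" "card J = N" "\<forall>j\<in>J. a j = s"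
      "\<forall>j\<in>J. \<forall>j'\<in>J. \<forall>p. j \<le> p \<longrightarrow> p \<le> j' \<longrightarrow> s \<le> a p" by blast
    show ?thesis
    proof (intro exI conjI)
      show "J \<subseteq> {lo..<lo+L}" using J(1) qK by auto
      show "card J = N" by (rule J(2))
      show "\<forall>j\<in>J. a j = s" by (rule J(3))
      show "\<forall>j\<in>J. \<forall>j'\<in>J. \<forall>p. j \<le> p \<longrightarrow> p \<le> j' \<longrightarrow> s \<le> a p" by (rule J(4))
    qed
  qed
qed

theorem lemma5p4:
  shows "\<exists>f :: nat \<Rightarrow> nat \<Rightarrow> nat. \<forall>(n::nat) (w::nat).
    \<forall>(V::nat set) (E::nat set) (ends::nat \<Rightarrow> nat set)
     (VT::nat set) (ET::nat \<Rightarrow> nat \<Rightarrow> bool) (Y::nat \<Rightarrow> nat set) (P::nat list).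
    0 < n \<longrightarrow> 0 < w \<longrightarrow>
    multigraph V E ends \<longrightarrow> V \<noteq> {} \<longrightarrow> connected_on (mg_adj E ends) V \<longrightarrow>
    lean_tree_decomp V E ends VT ET Y \<longrightarrow>
    (\<forall>t\<in>VT. card (Y t) \<le> w + 1) \<longrightarrow>
    is_path ET VT P \<longrightarrow> f n w \<le> length P - 1 \<longrightarrow>
    (\<exists>idx :: nat \<Rightarrow> nat.
       (\<forall>i j. 1 \<le> i \<longrightarrow> i < j \<longrightarrow> j \<le> n \<longrightarrow> idx i < idx j) \<and>
       0 < idx 1 \<and> idx n < length P - 1 \<and>
       (\<exists>s::nat. 0 < s \<and> s \<le> w + 1 \<and>
          (\<forall>i\<in>{1..n}. card (Y (P ! idx i)) = s) \<and>
          (\<forall>k. idx 1 \<le> k \<longrightarrow> k \<le> idx n \<longrightarrow> s \<le> card (Y (P ! k)))) \<and>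
       (\<exists>U. U \<subseteq> V \<and>
          (\<forall>i\<in>{1..n}. \<forall>j\<in>{1..n}. i \<noteq> j \<longrightarrow> Y (P ! idx i) \<inter> Y (P ! idx j) = U)))"
  proof (intro exI[of _ "\<lambda>n w. (Bd (w+1) n + 1)^(w+2) + 2"] allI impI)
  fix n w :: nat and V E :: "nat set" and ends :: "nat \<Rightarrow> nat set" and VT :: "nat set"
    and ET :: "nat \<Rightarrow> nat \<Rightarrow> bool" and Y :: "nat \<Rightarrow> nat set" and P :: "nat list"
  assume n0: "0 < n" and w0: "0 < w" and mg: "multigraph V E ends" and Vne: "V \<noteq> {}"
    and conn: "connected_on (mg_adj E ends) V" and lean: "lean_tree_decomp V E ends VT ET Y"
    and bnd: "\<forall>t\<in>VT. card (Y t) \<le> w + 1" and path: "is_path ET VT P"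
    and len: "(Bd (w+1) n + 1)^(w+2) + 2 \<le> length P - 1"
  define N where "N = Bd (w+1) n + 1"
  have N2: "2 \<le> N" unfolding N_def using Bd_pos[of "w+1" n] by simp
  have finV: "finite V" using mg[unfolded multigraph_def, THEN conjunct1] .
  have td: "tree_decomp V E ends VT ET Y" using lean[unfolded lean_tree_decomp_def, THEN conjunct1] .
  have YV: "\<forall>t\<in>VT. Y t \<subseteq> V" using td[unfolded tree_decomp_def, THEN conjunct2, THEN conjunct1] .
  have W4: "\<forall>t\<in>VT. \<forall>t'\<in>VT. t \<noteq> t' \<longrightarrow> Y t \<noteq> Y t'"
    using lean[unfolded lean_tree_decomp_def, THEN conjunct2, THEN conjunct2, THEN conjunct1] .
  have PVT: "set P \<subseteq> VT" and dist: "distinct P" using path unfolding is_path_def by auto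
  have len2: "N^(w+2) + 3 \<le> length P" using len unfolding N_def by linarith
  have PiVT: "\<And>i. i < length P \<Longrightarrow> P ! i \<in> VT" using PVT nth_mem by blast
  have inA: "\<forall>i. 1 \<le> i \<longrightarrow> i < 1 + (length P - 2) \<longrightarrow> card (Y (P ! i)) \<in> {..<w+2}"
  proof (intro allI impI)
    fix i assume "1 \<le> i" "i < 1 + (length P - 2)"
    hence "i < length P" by linarith
    hence "card (Y (P ! i)) \<le> w + 1" using bnd PiVT by blast
    thus "card (Y (P ! i)) \<in> {..<w+2}" by simp
  qed
  have N1: "1 \<le> N" using N2 by simp
  have "N ^ (w+2) \<le> length P - 2" using len2 by linarith
  from seq_lemma[OF N1, of "{..<w+2}" "w+2" 1 "length P - 2" "\<lambda>i. card (Y (P ! i))", OF _ _ inA this]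
  obtain J s where J: "J \<subseteq> {1..<1 + (length P - 2)}" "card J = N" "\<forall>j\<in>J. card (Y (P ! j)) = s"
    "\<forall>j\<in>J. \<forall>j'\<in>J. \<forall>p. j \<le> p \<longrightarrow> p \<le> j' \<longrightarrow> s \<le> card (Y (P ! p))" by auto
  have finJ: "finite J" using J(1) finite_subset by blast
  have lp: "3 \<le> length P" using len2 by linarith
  have Jlen: "\<And>j. j \<in> J \<Longrightarrow> 1 \<le> j \<and> j < length P - 1"
  proof -
    fix j assume "j \<in> J"
    hence "1 \<le> j" "j < 1 + (length P - 2)" using J(1) by auto
    thus "1 \<le> j \<and> j < length P - 1" using lp by linarith
  qed
  have injY: "inj_on (\<lambda>j. Y (P ! j)) J"
  proof (rule inj_onI)
    fix j j' assume jj: "j \<in> J" "j' \<in> J" "Y (P ! j) = Y (P ! j')"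
    have l: "j < length P" "j' < length P" using Jlen[OF jj(1)] Jlen[OF jj(2)] by auto
    have "P ! j = P ! j'" using W4 PiVT[OF l(1)] PiVT[OF l(2)] jj(3) by blast
    thus "j = j'" using nth_eq_iff_index_eq[OF dist l] by simp
  qed
  have "\<not> card J \<le> Suc 0" using J(2) N2 by simp
  then obtain j1 j2 where j12: "j1 \<in> J" "j2 \<in> J" "j1 \<noteq> j2" using card_le_Suc0_iff_eq[OF finJ] by blast
  have finY: "\<And>j. j \<in> J \<Longrightarrow> finite (Y (P ! j))"
  proof -
    fix j assume "j \<in> J"
    hence "j < length P" using Jlen by fastforce
    hence "Y (P ! j) \<subseteq> V" using YV PiVT by blast
    thus "finite (Y (P ! j))" using finV finite_subset by blast
  qed
  have s0: "0 < s"
  proof (rule ccontr)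
    assume "\<not> 0 < s"
    hence "Y (P ! j1) = {}" "Y (P ! j2) = {}" using J(3) j12 finY by auto
    hence "j1 = j2" using injY j12 unfolding inj_on_def by metis
    thus False using j12 by simp
  qed
  have sw: "s \<le> w + 1"
  proof -
    have "j1 < length P" using Jlen j12 by fastforce
    hence "card (Y (P ! j1)) \<le> w + 1" using bnd PiVT by blast
    thus ?thesis using J(3) j12 by simp
  qed
  have cdJ: "\<forall>i\<in>J. finite (Y (P ! i)) \<and> card (Y (P ! i)) \<le> w + 1" using finY J(3) sw by simp
  have "Bd (w+1) n < card J" using J(2) unfolding N_def by simp
  from sunflower[OF finJ injY cdJ this]
  obtain J' U where J': "J' \<subseteq> J" "card J' = n" "\<forall>i\<in>J'. \<forall>j\<in>J'. i \<noteq> j \<longrightarrow> Y (P ! i) \<inter> Y (P ! j) = U"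
    by blast
  have finJ': "finite J'" using J'(1) finJ finite_subset by blast
  define xs where "xs = sorted_list_of_set J'"
  have xl: "length xs = n" unfolding xs_def using J'(2) by simp
  have xsort: "sorted_wrt (<) xs" unfolding xs_def by (rule strict_sorted_list_of_set)
  have xset: "set xs = J'" unfolding xs_def using finJ' by simp
  have xdist: "distinct xs" unfolding xs_def by simp
  have xmem: "\<And>i. i \<in> {1..n} \<Longrightarrow> xs ! (i - 1) \<in> J"
  proof -
    fix i assume "i \<in> {1..n}"
    hence "i - 1 < length xs" using xl by auto
    hence "xs ! (i - 1) \<in> J'" using xset nth_mem by blast
    thus "xs ! (i - 1) \<in> J" using J'(1) by blast
  qed
  have xmem': "\<And>i. i \<in> {1..n} \<Longrightarrow> xs ! (i - 1) \<in> J'"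
  proof -
    fix i assume "i \<in> {1..n}"
    hence "i - 1 < length xs" using xl by auto
    thus "xs ! (i - 1) \<in> J'" using xset nth_mem by blast
  qed
  have m1: "xs ! (1 - 1) \<in> J" using xmem[of 1] n0 by simp
  have mn: "xs ! (n - 1) \<in> J" using xmem[of n] n0 by simp
  show "\<exists>idx :: nat \<Rightarrow> nat.
       (\<forall>i j. 1 \<le> i \<longrightarrow> i < j \<longrightarrow> j \<le> n \<longrightarrow> idx i < idx j) \<and>
       0 < idx 1 \<and> idx n < length P - 1 \<and>
       (\<exists>s::nat. 0 < s \<and> s \<le> w + 1 \<and>
          (\<forall>i\<in>{1..n}. card (Y (P ! idx i)) = s) \<and>
          (\<forall>k. idx 1 \<le> k \<longrightarrow> k \<le> idx n \<longrightarrow> s \<le> card (Y (P ! k)))) \<and>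
       (\<exists>U. U \<subseteq> V \<and>
          (\<forall>i\<in>{1..n}. \<forall>j\<in>{1..n}. i \<noteq> j \<longrightarrow> Y (P ! idx i) \<inter> Y (P ! idx j) = U))"
  proof (intro exI[of _ "\<lambda>i. xs ! (i - 1)"] conjI)
    show "\<forall>i j. 1 \<le> i \<longrightarrow> i < j \<longrightarrow> j \<le> n \<longrightarrow> xs ! (i - 1) < xs ! (j - 1)"
    proof (intro allI impI)
      fix i j :: nat assume "1 \<le> i" "i < j" "j \<le> n"
      hence "i - 1 < j - 1" "j - 1 < length xs" using xl by auto
      thus "xs ! (i - 1) < xs ! (j - 1)" using sorted_wrt_nth_less[OF xsort] by blast
    qed
    show "0 < xs ! (1 - 1)" using Jlen[OF m1] by simp
    show "xs ! (n - 1) < length P - 1" using Jlen[OF mn] by simp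
    show "\<exists>s::nat. 0 < s \<and> s \<le> w + 1 \<and>
          (\<forall>i\<in>{1..n}. card (Y (P ! (xs ! (i - 1)))) = s) \<and>
          (\<forall>k. xs ! (1 - 1) \<le> k \<longrightarrow> k \<le> xs ! (n - 1) \<longrightarrow> s \<le> card (Y (P ! k)))"
    proof (intro exI[of _ s] conjI)
      show "0 < s" by (rule s0)
      show "s \<le> w + 1" by (rule sw)
      show "\<forall>i\<in>{1..n}. card (Y (P ! (xs ! (i - 1)))) = s" using xmem J(3) by blast
      show "\<forall>k. xs ! (1 - 1) \<le> k \<longrightarrow> k \<le> xs ! (n - 1) \<longrightarrow> s \<le> card (Y (P ! k))"
        using J(4) m1 mn by blast
    qed
    show "\<exists>U. U \<subseteq> V \<and>
          (\<forall>i\<in>{1..n}. \<forall>j\<in>{1..n}. i \<noteq> j \<longrightarrow> Y (P ! (xs ! (i - 1))) \<inter> Y (P ! (xs ! (j - 1))) = U)"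
    proof (intro exI[of _ "U \<inter> V"] conjI ballI impI)
      show "U \<inter> V \<subseteq> V" by blast
      fix i j assume ij: "i \<in> {1..n}" "j \<in> {1..n}" "i \<noteq> j"
      have "i - 1 \<noteq> j - 1" "i - 1 < length xs" "j - 1 < length xs" using ij xl by auto
      hence ne: "xs ! (i - 1) \<noteq> xs ! (j - 1)" using nth_eq_iff_index_eq[OF xdist] by blast
      have eq: "Y (P ! (xs ! (i - 1))) \<inter> Y (P ! (xs ! (j - 1))) = U"
        using J'(3) xmem'[OF ij(1)] xmem'[OF ij(2)] ne by blast
      have "Y (P ! (xs ! (i - 1))) \<subseteq> V"
      proof -
        have "xs ! (i - 1) < length P" using Jlen[OF xmem[OF ij(1)]] by linarith
        thus ?thesis using YV PiVT by blast
      qed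
      thus "Y (P ! (xs ! (i - 1))) \<inter> Y (P ! (xs ! (j - 1))) = U \<inter> V" using eq by blast
    qed
  qed
qed

end
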